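(* Let $\mathsf{Prop}=\{p\}$, $\mathsf{Act}=\{a,b,c,d,e\}$, $\mathsf{Op}_{[\cdot]}=\{[\alpha]:\alpha\in\mathsf{Act}\}$ and $\mathsf{Op}_{\langle\cdot\rangle}=\{\langle\alpha\rangle^{\ge1}:\alpha\in\mathsf{Act}\}$. Let $\mathsf{L}'$ be a monotone fragment of $\mathsf{ML}(\mathsf{Prop},\mathsf{Act})$ with operator set $\mathsf{Op}'$ containing $p$, such that: $\langle\alpha\rangle^{\ge k}\notin\mathsf{Op}'$ for all $k\ge2$ and $\alpha\in\mathsf{Act}$; $\mathsf{Op}_{[\cdot]}\subseteq\mathsf{Op}'$ or $\mathsf{Op}_{\langle\cdot\rangle}\subseteq\mathsf{Op}'$; $\wedge\in\mathsf{Op}'$ implies $\mathsf{Op}_{[\cdot]}\subseteq\mathsf{Op}'$; and $\vee\in\mathsf{Op}'$ implies $\mathsf{Op}_{\langle\cdot\rangle}\subseteq\mathsf{Op}'$. Then for every $n\in\mathbb{N}$ there is a sample $\mathcal{S}=(\mathcal{P},\mathcal{N})$ of Kripke structures in $\mathcal{K}(\mathsf{Prop},\mathsf{Act})$ such that $k:=\sum_{K\in\mathcal{P}\cup\mathcal{N}}|Q_K|\ge n$ and the minimal size of an $\mathcal{S}$-separating $\mathsf{L}'$-formula is at least $2^{k/25}$.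
   Context: $\mathsf{ML}(\mathsf{Prop},\mathsf{Act})$-formulas: $\varphi::=q\mid\neg\varphi\mid\varphi\vee\varphi\mid\varphi\wedge\varphi\mid\langle\alpha\rangle^{\ge k}\varphi\mid[\alpha]\varphi$ with $q\in\mathsf{Prop}$, $\alpha\in\mathsf{Act}$, $k\ge1$. A fragment is given by a subset $\mathsf{Op}'$ of these operators (propositions, $\neg,\vee,\wedge$, each $\langle\alpha\rangle^{\ge k}$, each $[\alpha]$), its formulas being those using only operators of $\mathsf{Op}'$; it is monotone if $\neg\notin\mathsf{Op}'$ and at most one of $\vee,\wedge$ is in $\mathsf{Op}'$. $\mathsf{sz}(\varphi)$ is the number of distinct subformulas. $\mathcal{K}(\mathsf{Prop},\mathsf{Act})$: Kripke structures $K=(Q,I,A,\delta,P,\pi)$ with $Q=Q_K$ a finite non-empty set of states, $I\subseteq Q$ non-empty, $A\subseteq\mathsf{Act}$ non-empty, $\delta:Q\times A\to 2^Q$ (take $\delta(q,\alpha)=\emptyset$ for $\alpha\notin A$), $P\subseteq\mathsf{Prop}$, $\pi:Q\to 2^P$. Semantics at states: $q\models r$ iff $r\in\pi(q)$; Boolean connectives as usual; $q\models[\alpha]\varphi$ iff $\delta(q,\alpha)\subseteq\{q':q'\models\varphi\}$; $q\models\langle\alpha\rangle^{\ge k}\varphi$ iff $|\delta(q,\alpha)\cap\{q':q'\models\varphi\}|\ge k$. $K\models\varphi$ iff $q\models\varphi$ for all $q\in I$. A formula is $\mathcal{S}$-separating if satisfied by all structures in $\mathcal{P}$ and by none in $\mathcal{N}$.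 *)

theory Defs
  imports Complex_Main
begin

datatype prp = Pp
datatype act = Aa | Ab | Ac | Ad | Ae

text \<open>ML(Prop,Act)-formulas; Dia al k f stands for the counting diamond with threshold k.\<close>
datatype form =
    Atom prp
  | Neg form
  | Or form form
  | And form form
  | Dia act nat form
  | Box act form

datatype oper = OAtom prp | ONeg | OOr | OAnd | ODia act nat | OBox act

fun ops :: "form \<Rightarrow> oper set" where
  "ops (Atom q) = {OAtom q}"
| "ops (Neg f) = insert ONeg (ops f)"
| "ops (Or f g) = insert OOr (ops f \<union> ops g)"
| "ops (And f g) = insert OAnd (ops f \<union> ops g)"
| "ops (Dia al k f) = insert (ODia al k) (ops f)"
| "ops (Box al f) = insert (OBox al) (ops f)"

definition valid_ops :: "oper set \<Rightarrow> bool" where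
  "valid_ops Ops \<longleftrightarrow> (\<forall>al k. ODia al k \<in> Ops \<longrightarrow> k \<ge> 1)"

definition in_fragment :: "oper set \<Rightarrow> form \<Rightarrow> bool" where
  "in_fragment Ops f \<longleftrightarrow> ops f \<subseteq> Ops"

definition monotone_frag :: "oper set \<Rightarrow> bool" where
  "monotone_frag Ops \<longleftrightarrow> ONeg \<notin> Ops \<and> \<not> (OOr \<in> Ops \<and> OAnd \<in> Ops)"

definition Op_box :: "oper set" where
  "Op_box = {OBox al | al. True}"

definition Op_dia :: "oper set" where
  "Op_dia = {ODia al 1 | al. True}"

fun subformulas :: "form \<Rightarrow> form set" where
  "subformulas (Atom q) = {Atom q}"
| "subformulas (Neg f) = insert (Neg f) (subformulas f)"
| "subformulas (Or f g) = insert (Or f g) (subformulas f \<union> subformulas g)"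
| "subformulas (And f g) = insert (And f g) (subformulas f \<union> subformulas g)"
| "subformulas (Dia al k f) = insert (Dia al k f) (subformulas f)"
| "subformulas (Box al f) = insert (Box al f) (subformulas f)"

definition sz :: "form \<Rightarrow> nat" where
  "sz f = card (subformulas f)"

record kripke =
  states :: "nat set"
  init :: "nat set"
  acts :: "act set"
  trans :: "nat \<Rightarrow> act \<Rightarrow> nat set"
  props :: "prp set"
  lab :: "nat \<Rightarrow> prp set"

definition wf_kripke :: "kripke \<Rightarrow> bool" where
  "wf_kripke K \<longleftrightarrow>
     finite (states K) \<and> states K \<noteq> {} \<and>
     init K \<subseteq> states K \<and> init K \<noteq> {} \<and>
     acts K \<noteq> {} \<and>
     (\<forall>q al. trans K q al \<subseteq> states K) \<and>
     (\<forall>q al. al \<notin> acts K \<longrightarrow> trans K q al = {}) \<and>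
     (\<forall>q al. q \<notin> states K \<longrightarrow> trans K q al = {}) \<and>
     (\<forall>q. lab K q \<subseteq> props K) \<and>
     (\<forall>q. q \<notin> states K \<longrightarrow> lab K q = {})"

fun sat :: "kripke \<Rightarrow> nat \<Rightarrow> form \<Rightarrow> bool" where
  "sat K q (Atom r) \<longleftrightarrow> r \<in> lab K q"
| "sat K q (Neg f) \<longleftrightarrow> \<not> sat K q f"
| "sat K q (Or f g) \<longleftrightarrow> sat K q f \<or> sat K q g"
| "sat K q (And f g) \<longleftrightarrow> sat K q f \<and> sat K q g"
| "sat K q (Box al f) \<longleftrightarrow> trans K q al \<subseteq> {q'. sat K q' f}"
| "sat K q (Dia al k f) \<longleftrightarrow> card (trans K q al \<inter> {q'. sat K q' f}) \<ge> k"

definition models :: "kripke \<Rightarrow> form \<Rightarrow> bool" where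
  "models K f \<longleftrightarrow> (\<forall>q\<in>init K. sat K q f)"

definition separating :: "kripke set \<Rightarrow> kripke set \<Rightarrow> form \<Rightarrow> bool" where
  "separating Pos Negs f \<longleftrightarrow> (\<forall>K\<in>Pos. models K f) \<and> (\<forall>K\<in>Negs. \<not> models K f)"

end

theory Submission
  imports Defs "HOL-Library.Countable"
begin


fun bef :: "act \<Rightarrow> bool" where
  "bef Aa = False" | "bef Ab = True" | "bef Ac = True" | "bef Ad = False" | "bef Ae = False"
fun aft :: "act \<Rightarrow> bool" where
  "aft Aa = False" | "aft Ab = True" | "aft Ac = False" | "aft Ad = True" | "aft Ae = False"

definition okl :: "act \<Rightarrow> bool \<Rightarrow> bool" where
  "okl l c \<longleftrightarrow> l \<noteq> Ae \<and> ((l = Ac \<or> l = Ad) \<longleftrightarrow> c)"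

definition carry :: "nat \<Rightarrow> act list \<Rightarrow> nat \<Rightarrow> bool" where
  "carry R w m \<longleftrightarrow> m mod R = 0 \<or> w ! (m - 1) = Ac"

definition bn :: "bool \<Rightarrow> nat" where "bn b = (if b then 1 else 0)"

lemma sum_pow2: "(\<Sum>j<n. (2::nat) ^ j) = 2 ^ n - 1"
  by (induction n) auto

lemma block_inc:
  assumes R: "R \<ge> 1" and ok: "\<forall>i<length w. okl (w!i) (carry R w i)"
    and kb: "k * R + R \<le> length w" and t: "t \<le> R"
  shows "(\<Sum>j<t. bn (aft (w!(k*R+j))) * 2^j) + (if t = 0 then 1 else bn (w!(k*R+t-1) = Ac)) * 2^t
       = (\<Sum>j<t. bn (bef (w!(k*R+j))) * 2^j) + 1"
  using t
proof (induction t)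
  case 0
  then show ?case by simp
next
  case (Suc t)
  have tR: "t < R" using Suc.prems by simp
  have c: "carry R w (k*R+t) \<longleftrightarrow> (t = 0 \<or> w!(k*R+t-1) = Ac)"
    using tR by (simp add: carry_def)
  have o: "okl (w!(k*R+t)) (carry R w (k*R+t))" using ok kb tR by auto
  define cc where "cc = (if t = 0 then 1 else bn (w!(k*R+t-1) = Ac))"
  have cc: "cc = bn (carry R w (k*R+t))" using c by (simp add: cc_def bn_def)
  have key: "bn (aft (w!(k*R+t))) + 2 * bn (w!(k*R+t) = Ac) = bn (bef (w!(k*R+t))) + cc"
    using o unfolding cc okl_def bn_def by (cases "w!(k*R+t)") auto
  have IH: "(\<Sum>j<t. bn (aft (w!(k*R+j))) * 2^j) + cc * 2^t
       = (\<Sum>j<t. bn (bef (w!(k*R+j))) * 2^j) + 1" using Suc tR cc_def by simp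
  have "(\<Sum>j<Suc t. bn (aft (w!(k*R+j))) * 2^j) + bn (w!(k*R+Suc t-1) = Ac) * 2^Suc t
      = (\<Sum>j<t. bn (aft (w!(k*R+j))) * 2^j) + (bn (aft (w!(k*R+t))) + 2 * bn (w!(k*R+t) = Ac)) * 2^t"
    by (simp add: algebra_simps)
  also have "\<dots> = (\<Sum>j<t. bn (aft (w!(k*R+j))) * 2^j) + cc * 2^t + bn (bef (w!(k*R+t))) * 2^t"
    using key by (simp add: algebra_simps)
  also have "\<dots> = (\<Sum>j<Suc t. bn (bef (w!(k*R+j))) * 2^j) + 1"
    using IH by simp
  finally show ?case by (simp only: Suc_not_Zero if_False)
qed

lemma counting:
  assumes R: "R \<ge> 1" and len: "length w = m * R" and m: "m \<ge> 1"
    and ok: "\<forall>i<length w. okl (w!i) (carry R w i)"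
    and r5: "\<forall>i<R. i < length w \<longrightarrow> \<not> bef (w!i)"
    and r6: "\<forall>i. i + R < length w \<longrightarrow> bef (w!(i+R)) = aft (w!i)"
    and r7: "\<forall>i<length w. length w \<le> i + R \<longrightarrow> aft (w!i)"
  shows "2^R - 1 \<le> m"
proof -
  define BS where "BS k = (\<Sum>j<R. bn (bef (w!(k*R+j))) * 2^j)" for k
  define AS where "AS k = (\<Sum>j<R. bn (aft (w!(k*R+j))) * 2^j)" for k
  have C1: "AS k mod 2^R = (BS k + 1) mod 2^R" if "k < m" for k
  proof -
    have "Suc k * R \<le> m * R" using that by (intro mult_le_mono1) simp
    then have "k * R + R \<le> length w" using len by simp
    from block_inc[OF R ok this order_refl]
    have "AS k + (if R = 0 then 1 else bn (w!(k*R+R-1) = Ac)) * 2^R = BS k + 1"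
      by (simp add: AS_def BS_def)
    then obtain c where "AS k + c * 2^R = BS k + 1" by blast
    then have "(AS k + c * 2^R) mod 2^R = (BS k + 1) mod 2^R" by simp
    then show ?thesis by simp
  qed
  have C2: "BS (Suc k) = AS k" if "Suc k < m" for k
  proof -
    have "bef (w!(Suc k*R+j)) = aft (w!(k*R+j))" if "j < R" for j
    proof -
      have "Suc (Suc k) * R \<le> m * R" using \<open>Suc k < m\<close> by (intro mult_le_mono1) simp
      then have "Suc k * R + j < m * R" using that by simp
      then have "k*R+j + R < length w" using len by (simp add: algebra_simps)
      then show ?thesis using r6[rule_format, of "k*R+j"] by (simp add: algebra_simps)
    qed
    then show ?thesis unfolding AS_def BS_def by simp
  qed
  have C3: "BS 0 = 0"
  proof -
    have "R \<le> length w" using len m by (metis mult_le_mono1 mult_1)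
    then have "\<not> bef (w!j)" if "j < R" for j using r5 that by simp
    then show ?thesis unfolding BS_def by (simp add: bn_def)
  qed
  have C4: "AS (m - 1) = 2^R - 1"
  proof -
    have "aft (w!((m-1)*R+j))" if "j < R" for j
    proof -
      have e: "(m-1)*R + R = length w" using len m by (cases m) auto
      show ?thesis using r7 that e by auto
    qed
    then show ?thesis unfolding AS_def by (simp add: bn_def sum_pow2)
  qed
  have C5: "AS k mod 2^R = Suc k mod 2^R" if "k < m" for k
    using that
  proof (induction k)
    case 0
    then show ?case using C1 C3 by simp
  next
    case (Suc k)
    have "AS (Suc k) mod 2^R = (AS k + 1) mod 2^R" using C1[OF Suc.prems] C2[OF Suc.prems] by simp
    also have "\<dots> = (AS k mod 2^R + 1) mod 2^R" by (metis mod_add_left_eq)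
    also have "\<dots> = Suc (Suc k) mod 2^R" using Suc by (simp add: mod_Suc_eq)
    finally show ?case .
  qed
  have "(2^R - 1) mod 2^R = m mod 2^R" using C5[of "m-1"] C4 m by simp
  then have "m mod 2^R = 2^R - 1" by simp
  then show ?thesis using mod_less_eq_dividend[of m "2^R"] by simp
qed



datatype st = Err | Dst nat bool bool | Pend bool nat

instance st :: countable by countable_datatype

fun dl :: "nat \<Rightarrow> st \<Rightarrow> act \<Rightarrow> st set" where
  "dl R Err l = {Err}"
| "dl R (Dst j c f) l = (if \<not> okl l c \<or> (f \<and> bef l) then {Err}
     else {Dst (Suc j mod R) (Suc j mod R = 0 \<or> l = Ac) (f \<and> Suc j mod R \<noteq> 0), Pend (aft l) R})"
| "dl R (Pend v d) l = (if 2 \<le> d then {Pend v (d - 1)} else if bef l \<noteq> v then {Err} else {})"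

fun lb :: "st \<Rightarrow> bool" where
  "lb Err = False" | "lb (Dst j c f) = (j = 0)" | "lb (Pend v d) = v"

definition stepS :: "nat \<Rightarrow> st set \<Rightarrow> act \<Rightarrow> st set" where
  "stepS R S l = (\<Union>s\<in>S. dl R s l)"

definition rch :: "nat \<Rightarrow> act list \<Rightarrow> st set" where
  "rch R w = foldl (stepS R) {Dst 0 True True} w"

lemma rch_Suc: "m < length w \<Longrightarrow> rch R (take (Suc m) w) = stepS R (rch R (take m w)) (w!m)"
  by (simp add: rch_def take_Suc_conv_app_nth)

lemma rch_step: "m < length w \<Longrightarrow> s \<in> rch R (take m w) \<Longrightarrow> t \<in> dl R s (w!m) \<Longrightarrow> t \<in> rch R (take (Suc m) w)"
  by (auto simp: rch_Suc stepS_def)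

definition derr :: "nat \<Rightarrow> act list \<Rightarrow> nat \<Rightarrow> bool" where
  "derr R w i \<longleftrightarrow> \<not> okl (w!i) (carry R w i) \<or> (i < R \<and> bef (w!i))"

lemma Drun:
  assumes "R \<ge> 1" "m \<le> length w" "\<forall>i<m. \<not> derr R w i"
  shows "Dst (m mod R) (carry R w m) (m < R) \<in> rch R (take m w)"
  using assms(2,3)
proof (induction m)
  case 0
  then show ?case using assms(1) by (simp add: rch_def carry_def)
next
  case (Suc m)
  have IH: "Dst (m mod R) (carry R w m) (m < R) \<in> rch R (take m w)" using Suc by simp
  have nd: "\<not> derr R w m" using Suc by simp
  have e1: "Suc (m mod R) mod R = Suc m mod R" by (simp add: mod_Suc_eq)
  have e2: "(m < R \<and> Suc m mod R \<noteq> 0) = (Suc m < R)"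
  proof (cases "m < R")
    case True
    then show ?thesis by (cases "Suc m = R") auto
  next
    case False
    then show ?thesis by simp
  qed
  have "Dst (Suc m mod R) (carry R w (Suc m)) (Suc m < R) \<in> dl R (Dst (m mod R) (carry R w m) (m < R)) (w!m)"
    using nd e1 e2 unfolding derr_def by (auto simp: carry_def)
  then show ?case using rch_step[OF _ IH] Suc.prems by simp
qed

lemma Err_persist:
  assumes "Err \<in> rch R (take m w)" "m \<le> n" "n \<le> length w"
  shows "Err \<in> rch R (take n w)"
  using assms(2,3)
proof (induction n)
  case 0
  then show ?case using assms(1) by simp
next
  case (Suc n)
  show ?case
  proof (cases "m = Suc n")
    case True
    then show ?thesis using assms(1) by simp
  next
    case False
    then have "Err \<in> rch R (take n w)" using Suc by simp
    then show ?thesis using rch_step[of n w Err R Err] Suc.prems by simp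
  qed
qed

lemma Pend_count:
  assumes "Pend v d \<in> rch R (take m w)" "t < d" "m + t \<le> length w"
  shows "Pend v (d - t) \<in> rch R (take (m + t) w)"
  using assms(2,3)
proof (induction t)
  case 0
  then show ?case using assms(1) by simp
next
  case (Suc t)
  then have IH: "Pend v (d - t) \<in> rch R (take (m + t) w)" by simp
  have "Pend v (d - Suc t) \<in> dl R (Pend v (d - t)) (w!(m+t))" using Suc.prems by auto
  then show ?case using rch_step[OF _ IH] Suc.prems by simp
qed

lemma catch:
  assumes R: "R \<ge> 1" and ne: "w \<noteq> []" and short: "length w < R * (2^R - 1)"
  shows "\<exists>x\<in>rch R w. \<not> lb x"
proof (rule ccontr)
  assume "\<not> ?thesis"
  then have all: "\<forall>x\<in>rch R (take (length w) w). lb x" by simp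
  have noE: "Err \<notin> rch R (take n w)" if "n \<le> length w" for n
    using Err_persist[OF _ that order_refl] all by fastforce
  have nod: "\<not> derr R w i" if "i < length w" for i
  proof
    assume "derr R w i"
    define i0 where "i0 = (LEAST i. derr R w i)"
    have d0: "derr R w i0" using \<open>derr R w i\<close> unfolding i0_def by (rule LeastI)
    have le: "i0 \<le> i" using \<open>derr R w i\<close> unfolding i0_def by (rule Least_le)
    have lt: "\<forall>i'<i0. \<not> derr R w i'" unfolding i0_def using not_less_Least by blast
    have Dm: "Dst (i0 mod R) (carry R w i0) (i0 < R) \<in> rch R (take i0 w)"
      using Drun[OF R _ lt] le that by simp
    have "Err \<in> dl R (Dst (i0 mod R) (carry R w i0) (i0 < R)) (w!i0)"
      using d0 unfolding derr_def by auto
    then have "Err \<in> rch R (take (Suc i0) w)" using rch_step[OF _ Dm] le that by simp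
    then show False using noE le that by simp
  qed
  have Dend: "Dst (length w mod R) (carry R w (length w)) (length w < R) \<in> rch R (take (length w) w)"
    using Drun[OF R order_refl] nod by simp
  then have modz: "length w mod R = 0" using all by fastforce
  have spawn: "Pend (aft (w!i)) R \<in> rch R (take (Suc i) w)" if "i < length w" for i
  proof -
    have Dm: "Dst (i mod R) (carry R w i) (i < R) \<in> rch R (take i w)"
      using Drun[OF R, of i w] nod that by simp
    have "Pend (aft (w!i)) R \<in> dl R (Dst (i mod R) (carry R w i) (i < R)) (w!i)"
      using nod[OF that] unfolding derr_def by auto
    then show ?thesis using rch_step[OF that Dm] by simp
  qed
  have r6: "bef (w!(i+R)) = aft (w!i)" if "i + R < length w" for i
  proof (rule ccontr)
    assume neq: "bef (w!(i+R)) \<noteq> aft (w!i)"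
    have "Pend (aft (w!i)) (R - (R - 1)) \<in> rch R (take (Suc i + (R - 1)) w)"
      using Pend_count[OF spawn, of i "R - 1"] that R by simp
    then have P1: "Pend (aft (w!i)) 1 \<in> rch R (take (i + R) w)" using R by simp
    have "Err \<in> dl R (Pend (aft (w!i)) 1) (w!(i+R))" using neq by simp
    then have "Err \<in> rch R (take (Suc (i+R)) w)" using rch_step[OF that P1] by simp
    then show False using noE that by simp
  qed
  have r7: "aft (w!i)" if "i < length w" "length w \<le> i + R" for i
  proof (rule ccontr)
    assume na: "\<not> aft (w!i)"
    have "Pend (aft (w!i)) (R - (length w - Suc i)) \<in> rch R (take (Suc i + (length w - Suc i)) w)"
      using Pend_count[OF spawn[OF that(1)], of "length w - Suc i"] that by simp
    then have "Pend False (R - (length w - Suc i)) \<in> rch R (take (length w) w)"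
      using that na by simp
    then show False using all by fastforce
  qed
  define m where "m = length w div R"
  have len: "length w = m * R" using modz div_mult_mod_eq[of "length w" R] unfolding m_def by simp
  have m1: "m \<ge> 1" using len ne by (cases m) auto
  have "2^R - 1 \<le> m"
  proof (rule counting[OF R len m1])
    show "\<forall>i<length w. okl (w!i) (carry R w i)" using nod unfolding derr_def by blast
    show "\<forall>i<R. i < length w \<longrightarrow> \<not> bef (w!i)" using nod unfolding derr_def by blast
    show "\<forall>i. i + R < length w \<longrightarrow> bef (w!(i+R)) = aft (w!i)" using r6 by blast
    show "\<forall>i<length w. length w \<le> i + R \<longrightarrow> aft (w!i)" using r7 by blast
  qed
  then have "R * (2^R - 1) \<le> length w" using len by (simp add: mult.commute)
  then show False using short by simp
qed



lemma sound:
  assumes R: "R \<ge> 1" and nod: "\<forall>i<length w. \<not> derr R w i" and modz: "length w mod R = 0"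
    and r6: "\<forall>i. i + R < length w \<longrightarrow> bef (w!(i+R)) = aft (w!i)"
    and r7: "\<forall>i<length w. length w \<le> i + R \<longrightarrow> aft (w!i)"
  shows "\<forall>x\<in>rch R w. lb x"
proof -
  define BB where "BB j = (if j < length w then bef (w!j) else True)" for j
  define inv where "inv m x = (x = Dst (m mod R) (carry R w m) (m < R) \<or>
      (\<exists>v d. x = Pend v d \<and> 1 \<le> d \<and> d \<le> R \<and> v = BB (m + d - 1)))" for m x
  have I: "\<forall>x\<in>rch R (take m w). inv m x" if "m \<le> length w" for m
    using that
  proof (induction m)
    case 0
    then show ?case using R by (simp add: rch_def inv_def carry_def)
  next
    case (Suc m)
    have ml: "m < length w" using Suc by simp
    have IH: "\<forall>x\<in>rch R (take m w). inv m x" using Suc by simp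
    show ?case
    proof
      fix x assume "x \<in> rch R (take (Suc m) w)"
      then obtain y where y: "y \<in> rch R (take m w)" and xy: "x \<in> dl R y (w!m)"
        using rch_Suc[OF ml] by (auto simp: stepS_def)
      have iy: "inv m y" using IH y by blast
      show "inv (Suc m) x"
      proof (cases "y = Dst (m mod R) (carry R w m) (m < R)")
        case True
        have nd: "\<not> derr R w m" using nod ml by blast
        have e1: "Suc (m mod R) mod R = Suc m mod R" by (simp add: mod_Suc_eq)
        have e2: "(m < R \<and> Suc m mod R \<noteq> 0) = (Suc m < R)"
        proof (cases "m < R")
          case True
          then show ?thesis by (cases "Suc m = R") auto
        next
          case False
          then show ?thesis by simp
        qed
        have "x = Dst (Suc m mod R) (carry R w (Suc m)) (Suc m < R) \<or> x = Pend (aft (w!m)) R"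
          using xy True nd e1 e2 unfolding derr_def by (auto simp: carry_def split: if_splits)
        moreover have "aft (w!m) = BB (Suc m + R - 1)"
          using r6 r7 ml unfolding BB_def by (auto simp: add.commute)
        ultimately show ?thesis unfolding inv_def using R by auto
      next
        case False
        then obtain v d where yd: "y = Pend v d" "1 \<le> d" "d \<le> R" "v = BB (m + d - 1)"
          using iy unfolding inv_def by blast
        show ?thesis
        proof (cases "2 \<le> d")
          case True
          then have "x = Pend v (d - 1)" using xy yd by simp
          then show ?thesis unfolding inv_def using yd True by auto
        next
          case False
          then have "d = 1" using yd by simp
          then have "v = bef (w!m)" using yd ml unfolding BB_def by simp
          then show ?thesis using xy yd \<open>d = 1\<close> by simp
        qed
      qed
    qed
  qed
  show ?thesis
  proof
    fix x assume "x \<in> rch R w"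
    then have "inv (length w) x" using I[of "length w"] by simp
    then show "lb x" unfolding inv_def BB_def using modz by auto
  qed
qed

definition bitk :: "nat \<Rightarrow> nat \<Rightarrow> bool" where "bitk k j = odd (k div 2^j)"

definition code :: "bool \<Rightarrow> bool \<Rightarrow> act" where
  "code b a = (if b then (if a then Ab else Ac) else (if a then Ad else Aa))"

definition WW :: "nat \<Rightarrow> act list" where
  "WW R = map (\<lambda>i. code (bitk (i div R) (i mod R)) (bitk (Suc (i div R)) (i mod R))) [0..<R * (2^R - 1)]"

lemma bef_code[simp]: "bef (code b a) = b" and aft_code[simp]: "aft (code b a) = a"
  by (auto simp: code_def)

lemma code_Ac: "code b a = Ac \<longleftrightarrow> b \<and> \<not> a" by (auto simp: code_def)

lemma okl_code: "okl (code b a) c \<longleftrightarrow> ((b \<noteq> a) \<longleftrightarrow> c)" by (auto simp: code_def okl_def)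

lemma A1: "Suc k div 2^j = k div 2^j + (if k mod 2^j = 2^j - 1 then 1 else 0)"
proof -
  have p: "(2::nat)^j > 0" by simp
  have k: "Suc k = Suc (k mod 2^j) + (k div 2^j) * 2^j" using mod_div_mult_eq[of k "2^j"] by simp
  have lt: "k mod 2^j < 2^j" using p by simp
  show ?thesis
  proof (cases "k mod 2^j = 2^j - 1")
    case True
    then have "Suc (k mod 2^j) = 1 * 2^j" using p by simp
    then have "Suc k = (Suc (k div 2^j)) * 2^j" using k by simp
    then have "Suc k div 2^j = Suc (k div 2^j)" using p by simp
    then show ?thesis using True by simp
  next
    case False
    then have "Suc (k mod 2^j) < 2^j" using lt p by linarith
    then have "Suc (k mod 2^j) div 2^j = 0" by simp
    have "Suc k div 2^j = (Suc (k mod 2^j) + (k div 2^j) * 2^j) div 2^j" using k by (rule arg_cong)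
    also have "\<dots> = k div 2^j + Suc (k mod 2^j) div 2^j" by (rule div_mult_self1) simp
    finally have "Suc k div 2^j = k div 2^j" using \<open>Suc (k mod 2^j) div 2^j = 0\<close> by simp
    then show ?thesis using False by simp
  qed
qed

lemma flip_iff: "bitk (Suc k) j \<noteq> bitk k j \<longleftrightarrow> k mod 2^j = 2^j - 1"
  unfolding bitk_def by (subst A1) auto

lemma A2: "k mod 2^(Suc j) = 2^(Suc j) - 1 \<longleftrightarrow> bitk k j \<and> k mod 2^j = 2^j - 1"
proof -
  have e: "k mod 2^(Suc j) = 2^j * (k div 2^j mod 2) + k mod 2^j"
    by (metis mod_mult2_eq power_Suc2)
  have lt: "k mod 2^j < 2^j" by simp
  have d: "k div 2^j mod 2 = 0 \<or> k div 2^j mod 2 = 1" by auto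
  show ?thesis
  proof (cases "k div 2^j mod 2 = 1")
    case True
    then show ?thesis using e lt unfolding bitk_def by (auto simp: odd_iff_mod_2_eq_one)
  next
    case False
    then have z: "k div 2^j mod 2 = 0" using d by simp
    then have "k mod 2^(Suc j) = k mod 2^j" using e by simp
    moreover have "(1::nat) \<le> 2^j" by simp
    then have "k mod 2^j < 2^(Suc j) - 1" using lt unfolding power_Suc by linarith
    ultimately have "k mod 2^(Suc j) \<noteq> 2^(Suc j) - 1" by simp
    moreover have "\<not> bitk k j" using z unfolding bitk_def by (simp add: odd_iff_mod_2_eq_one)
    ultimately show ?thesis by simp
  qed
qed

lemma bitk_max: "j < R \<Longrightarrow> bitk (2^R - 1) j"
proof -
  assume "j < R"
  then have "bit (mask R :: nat) j" by (simp add: bit_mask_iff)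
  then show ?thesis unfolding bitk_def by (simp add: bit_iff_odd mask_eq_exp_minus_1)
qed

lemma bitk0: "\<not> bitk 0 j" by (simp add: bitk_def)



lemma len_WW: "length (WW R) = R * (2^R - 1)" by (simp add: WW_def)

lemma nth_WW: "i < length (WW R) \<Longrightarrow> WW R ! i = code (bitk (i div R) (i mod R)) (bitk (Suc (i div R)) (i mod R))"
  by (simp add: WW_def)

lemma pred_divmod:
  fixes i R :: nat assumes "0 < i mod R" and R: "R > 0"
  shows "(i - 1) div R = i div R \<and> (i - 1) mod R = i mod R - 1"
proof -
  have i: "i = i div R * R + i mod R" by simp
  then have "i - 1 = i div R * R + (i mod R - 1)" using assms by linarith
  moreover have "i mod R - 1 < R" using R mod_less_divisor[OF R, of i] by linarith
  ultimately show ?thesis using R by simp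
qed

lemma WW_props:
  assumes R: "R \<ge> 1"
  shows "\<forall>i<length (WW R). \<not> derr R (WW R) i"
    and "length (WW R) mod R = 0"
    and "\<forall>i. i + R < length (WW R) \<longrightarrow> bef (WW R!(i+R)) = aft (WW R!i)"
    and "\<forall>i<length (WW R). length (WW R) \<le> i + R \<longrightarrow> aft (WW R!i)"
proof -
  let ?W = "WW R"
  show "length ?W mod R = 0" by (simp add: len_WW)
  show "\<forall>i. i + R < length ?W \<longrightarrow> bef (?W!(i+R)) = aft (?W!i)"
  proof (intro allI impI)
    fix i assume a: "i + R < length ?W"
    have "(i + R) div R = Suc (i div R)" "(i + R) mod R = i mod R" using R by auto
    then show "bef (?W!(i+R)) = aft (?W!i)" using a nth_WW[of "i+R" R] nth_WW[of i R] by simp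
  qed
  show "\<forall>i<length ?W. length ?W \<le> i + R \<longrightarrow> aft (?W!i)"
  proof (intro allI impI)
    fix i assume a: "i < length ?W" and b: "length ?W \<le> i + R"
    have "i < (2^R - 1) * R" using a by (simp add: len_WW mult.commute)
    then have d1: "i div R < 2^R - 1" by (rule less_mult_imp_div_less)
    have "(R * (2^R - 1)) div R \<le> (i + R) div R" using b by (intro div_le_mono) (simp add: len_WW)
    then have "2^R - 1 \<le> Suc (i div R)" using R by simp
    then have "Suc (i div R) = 2^R - 1" using d1 by simp
    moreover have "i mod R < R" using R by simp
    ultimately show "aft (?W!i)" using nth_WW[OF a] bitk_max by simp
  qed
  show "\<forall>i<length ?W. \<not> derr R ?W i"
  proof (intro allI impI)
    fix i assume a: "i < length ?W"
    define k where "k = i div R"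
    define j where "j = i mod R"
    have Wi: "?W!i = code (bitk k j) (bitk (Suc k) j)" using nth_WW[OF a] k_def j_def by simp
    have fl: "(bitk k j \<noteq> bitk (Suc k) j) \<longleftrightarrow> k mod 2^j = 2^j - 1" using flip_iff by metis
    have ca: "carry R ?W i \<longleftrightarrow> k mod 2^j = 2^j - 1"
    proof (cases "j = 0")
      case True
      then show ?thesis by (simp add: carry_def j_def)
    next
      case False
      then have jp: "0 < i mod R" using j_def by simp
      have pd: "(i - 1) div R = k" "(i - 1) mod R = j - 1" using pred_divmod[OF jp] R k_def j_def by auto
      have a': "i - 1 < length ?W" using a by simp
      have "?W!(i-1) = code (bitk k (j-1)) (bitk (Suc k) (j-1))" using nth_WW[OF a'] pd by simp
      then have "?W!(i-1) = Ac \<longleftrightarrow> bitk k (j-1) \<and> (bitk (Suc k) (j-1) \<noteq> bitk k (j-1))"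
        by (auto simp: code_Ac)
      also have "\<dots> \<longleftrightarrow> bitk k (j-1) \<and> k mod 2^(j-1) = 2^(j-1) - 1" using flip_iff by metis
      also have "\<dots> \<longleftrightarrow> k mod 2^(Suc (j-1)) = 2^(Suc (j-1)) - 1" using A2 by metis
      also have "\<dots> \<longleftrightarrow> k mod 2^j = 2^j - 1" using False by simp
      finally show ?thesis using False jp by (simp add: carry_def j_def)
    qed
    have ok: "okl (?W!i) (carry R ?W i)" using Wi fl ca okl_code by simp
    have "i < R \<Longrightarrow> \<not> bef (?W!i)" using Wi bitk0 k_def by simp
    then show "\<not> derr R ?W i" using ok unfolding derr_def by blast
  qed
qed

lemma WW_sound: assumes R: "R \<ge> 1" shows "\<forall>x\<in>rch R (WW R). lb x"
  by (rule sound[OF R WW_props[OF R]])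

lemma WW_ne: "R \<ge> 1 \<Longrightarrow> WW R \<noteq> []"
proof -
  assume "R \<ge> 1"
  moreover have "(2::nat)^R \<ge> 2" using \<open>R \<ge> 1\<close> by (metis power_increasing power_one_right one_le_numeral)
  ultimately have "R * (2^R - 1) > 0" by simp
  then show ?thesis by (metis len_WW length_0_conv less_not_refl)
qed



definition mkK :: "'a::countable set \<Rightarrow> 'a set \<Rightarrow> ('a \<Rightarrow> act \<Rightarrow> 'a set) \<Rightarrow> ('a \<Rightarrow> bool) \<Rightarrow> kripke" where
  "mkK V I d l = \<lparr> states = to_nat ` V, init = to_nat ` I, acts = UNIV,
     trans = (\<lambda>q a. if q \<in> to_nat ` V then to_nat ` d (from_nat q) a else {}),
     props = {Pp}, lab = (\<lambda>q. if q \<in> to_nat ` V \<and> l (from_nat q) then {Pp} else {}) \<rparr>"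

definition closed :: "'a set \<Rightarrow> ('a \<Rightarrow> act \<Rightarrow> 'a set) \<Rightarrow> bool" where
  "closed V d \<longleftrightarrow> (\<forall>s\<in>V. \<forall>a. d s a \<subseteq> V)"

lemma wf_mkK:
  assumes "finite V" "V \<noteq> {}" "I \<subseteq> V" "I \<noteq> {}" "closed V d"
  shows "wf_kripke (mkK V I d l)"
  using assms unfolding wf_kripke_def mkK_def closed_def by (auto, blast+)

lemma card_mkK: "card (states (mkK V I d l)) = card V"
  unfolding mkK_def by (simp add: card_image inj_on_def)

lemma trans_mk: "s \<in> V \<Longrightarrow> trans (mkK V I d l) (to_nat s) a = to_nat ` d s a"
  unfolding mkK_def by auto

lemma lab_mk: "s \<in> V \<Longrightarrow> (Pp \<in> lab (mkK V I d l) (to_nat s)) = l s"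
  unfolding mkK_def by auto

lemma prp_Pp: "r = Pp" by (cases r) simp

lemma sat_mk_Atom: "s \<in> V \<Longrightarrow> sat (mkK V I d l) (to_nat s) (Atom r) \<longleftrightarrow> l s"
  using lab_mk prp_Pp by (metis sat.simps(1))

lemma sat_mk_Box: "s \<in> V \<Longrightarrow> sat (mkK V I d l) (to_nat s) (Box a g) \<longleftrightarrow> (\<forall>t\<in>d s a. sat (mkK V I d l) (to_nat t) g)"
  using trans_mk[of s V I d l a] by auto

lemma card_ge1: "finite A \<Longrightarrow> (1 \<le> card A) = (A \<noteq> {})"
  by (simp add: Suc_le_eq card_gt_0_iff)

lemma sat_mk_Dia1:
  assumes "finite V" "closed V d" "s \<in> V"
  shows "sat (mkK V I d l) (to_nat s) (Dia a 1 g) \<longleftrightarrow> (\<exists>t\<in>d s a. sat (mkK V I d l) (to_nat t) g)"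
proof -
  have f: "finite (d s a)" using assms unfolding closed_def by (meson finite_subset)
  have "sat (mkK V I d l) (to_nat s) (Dia a 1 g) \<longleftrightarrow>
     1 \<le> card (to_nat ` d s a \<inter> {q'. sat (mkK V I d l) q' g})" using trans_mk[OF assms(3)] by simp
  also have "\<dots> \<longleftrightarrow> to_nat ` d s a \<inter> {q'. sat (mkK V I d l) q' g} \<noteq> {}"
    using f by (intro card_ge1) simp
  finally show ?thesis by auto
qed

lemma sat_mk_Dia_le1:
  assumes "finite V" "closed V d" "s \<in> V" "k \<le> 1" "t \<in> d s a" "sat (mkK V I d l) (to_nat t) g"
  shows "sat (mkK V I d l) (to_nat s) (Dia a k g)"
proof -
  have "sat (mkK V I d l) (to_nat s) (Dia a 1 g)" using sat_mk_Dia1[OF assms(1-3)] assms(5,6) by blast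
  then show ?thesis using assms(4) by simp
qed

definition rk :: "kripke \<Rightarrow> nat set \<Rightarrow> act list \<Rightarrow> nat set" where
  "rk K S w = foldl (\<lambda>S a. \<Union>q\<in>S. trans K q a) S w"

lemma rk_snoc: "rk K S (w @ [a]) = (\<Union>q\<in>rk K S w. trans K q a)"
  by (simp add: rk_def)

definition rkA :: "('a \<Rightarrow> act \<Rightarrow> 'a set) \<Rightarrow> 'a set \<Rightarrow> act list \<Rightarrow> 'a set" where
  "rkA d S w = foldl (\<lambda>S a. \<Union>s\<in>S. d s a) S w"

lemma rkA_sub: "closed V d \<Longrightarrow> S \<subseteq> V \<Longrightarrow> rkA d S w \<subseteq> V"
proof (induction w arbitrary: S)
  case Nil
  then show ?case by (simp add: rkA_def)
next
  case (Cons a w)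
  have "(\<Union>s\<in>S. d s a) \<subseteq> V" using Cons.prems unfolding closed_def by blast
  then show ?case using Cons.IH[of "\<Union>s\<in>S. d s a"] Cons.prems by (simp add: rkA_def)
qed

lemma rk_mk: "closed V d \<Longrightarrow> S \<subseteq> V \<Longrightarrow> rk (mkK V I d l) (to_nat ` S) w = to_nat ` rkA d S w"
proof (induction w arbitrary: S)
  case Nil
  then show ?case by (simp add: rk_def rkA_def)
next
  case (Cons a w)
  have sub: "(\<Union>s\<in>S. d s a) \<subseteq> V" using Cons.prems unfolding closed_def by blast
  have "(\<Union>q\<in>to_nat ` S. trans (mkK V I d l) q a) = (\<Union>s\<in>S. trans (mkK V I d l) (to_nat s) a)" by simp
  also have "\<dots> = (\<Union>s\<in>S. to_nat ` d s a)" using trans_mk[of _ V I d l a] Cons.prems(2) by (intro SUP_cong) auto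
  also have "\<dots> = to_nat ` (\<Union>s\<in>S. d s a)" by (simp add: image_UN)
  finally have "(\<Union>q\<in>to_nat ` S. trans (mkK V I d l) q a) = to_nat ` (\<Union>s\<in>S. d s a)" .
  then show ?case using Cons.IH[OF Cons.prems(1) sub] by (simp add: rk_def rkA_def)
qed

definition good :: "form \<Rightarrow> bool" where
  "good f \<longleftrightarrow> ONeg \<notin> ops f \<and> OOr \<notin> ops f \<and> (\<forall>al k. ODia al k \<in> ops f \<longrightarrow> k \<le> 1)"

fun hgt :: "form \<Rightarrow> nat" where
  "hgt (Atom q) = 0"
| "hgt (Neg f) = hgt f"
| "hgt (Or f g) = max (hgt f) (hgt g)"
| "hgt (And f g) = max (hgt f) (hgt g)"
| "hgt (Dia al k f) = Suc (hgt f)"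
| "hgt (Box al f) = Suc (hgt f)"

lemma subf_size: "x \<in> subformulas f \<Longrightarrow> size x \<le> size f"
  by (induction f) auto

lemma subf_finite: "finite (subformulas f)"
  by (induction f) auto

lemma hgt_sz: "hgt f < sz f"
  unfolding sz_def
proof (induction f)
  case (Atom x)
  then show ?case by simp
next
  case (Neg f)
  have "Neg f \<notin> subformulas f" using subf_size by fastforce
  then show ?case using Neg subf_finite by simp
next
  case (Or f g)
  have "card (subformulas f) \<le> card (subformulas (Or f g))" "card (subformulas g) \<le> card (subformulas (Or f g))"
    by (auto intro!: card_mono simp: subf_finite)
  then show ?case using Or by simp
next
  case (And f g)
  have "card (subformulas f) \<le> card (subformulas (And f g))" "card (subformulas g) \<le> card (subformulas (And f g))"
    by (auto intro!: card_mono simp: subf_finite)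
  then show ?case using And by simp
next
  case (Dia x1 x2 f)
  have "Dia x1 x2 f \<notin> subformulas f" using subf_size by fastforce
  then show ?case using Dia subf_finite by simp
next
  case (Box x1 f)
  have "Box x1 f \<notin> subformulas f" using subf_size by fastforce
  then show ?case using Box subf_finite by simp
qed



datatype nst = Y0 | Sk | Uu
instance nst :: countable by countable_datatype

fun dN :: "nst \<Rightarrow> act \<Rightarrow> nst set" where
  "dN Uu a = {Uu}" | "dN Y0 a = {Sk, Uu}" | "dN Sk a = {Sk, Uu}"
fun lN :: "nst \<Rightarrow> bool" where
  "lN Sk = False" | "lN Y0 = True" | "lN Uu = True"

lemma UNIV_nst: "(UNIV :: nst set) = {Y0, Sk, Uu}"
  using nst.exhaust by auto

lemma fin_nst: "finite (UNIV :: nst set)" by (simp add: UNIV_nst)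
lemma card_nst: "card (UNIV :: nst set) = 3" by (simp add: UNIV_nst)
lemma closed_N: "closed UNIV dN" by (simp add: closed_def)

definition NK :: kripke where "NK = mkK UNIV {Y0} dN lN"
definition NKc :: kripke where "NKc = mkK UNIV {Y0} dN (\<lambda>s. \<not> lN s)"

lemma good_simps:
  "good (Atom r)" "\<not> good (Neg f)" "\<not> good (Or f g)"
  "good (And f g) \<longleftrightarrow> good f \<and> good g"
  "good (Box a f) \<longleftrightarrow> good f"
  "good (Dia a k f) \<longleftrightarrow> good f \<and> k \<le> 1"
  unfolding good_def by auto

lemma Uu_sat: "good f \<Longrightarrow> sat NK (to_nat Uu) f"
proof (induction f)
  case (Atom x)
  then show ?case unfolding NK_def using sat_mk_Atom[of Uu UNIV] by simp
next
  case (Neg f)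
  then show ?case by (simp add: good_simps)
next
  case (Or f1 f2)
  then show ?case by (simp add: good_simps)
next
  case (And f1 f2)
  then show ?case by (simp add: good_simps)
next
  case (Dia x1 x2 f)
  then show ?case unfolding NK_def
    using sat_mk_Dia_le1[OF fin_nst closed_N, of Uu x2 Uu x1 "{Y0}" lN f] by (simp add: good_simps NK_def)
next
  case (Box x1 f)
  then show ?case unfolding NK_def using sat_mk_Box[of Uu UNIV "{Y0}" dN lN x1 f] by (simp add: good_simps NK_def)
qed

lemma S_lem:
  assumes catchK: "\<forall>w. 1 \<le> length w \<and> length w < L \<longrightarrow> (\<exists>q\<in>rk K (init K) w. Pp \<notin> lab K q)"
  shows "good g \<Longrightarrow> 1 \<le> length w \<Longrightarrow> length w + hgt g < L \<Longrightarrow> (\<forall>q\<in>rk K (init K) w. sat K q g) \<Longrightarrow> sat NK (to_nat Sk) g"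
proof (induction g arbitrary: w)
  case (Atom x)
  then obtain q where "q \<in> rk K (init K) w" "Pp \<notin> lab K q" using catchK by auto
  then show ?case using Atom prp_Pp[of x] by auto
next
  case (Neg g)
  then show ?case by (simp add: good_simps)
next
  case (Or g1 g2)
  then show ?case by (simp add: good_simps)
next
  case (And g1 g2)
  then show ?case by (simp add: good_simps)
next
  case (Dia x1 x2 g)
  then show ?case unfolding NK_def
    using sat_mk_Dia_le1[OF fin_nst closed_N, of Sk x2 Uu x1 "{Y0}" lN g] Uu_sat[of g] by (simp add: good_simps NK_def)
next
  case (Box a g)
  have "\<forall>q\<in>rk K (init K) (w @ [a]). sat K q g" using Box.prems(4) by (auto simp: rk_snoc)
  then have "sat NK (to_nat Sk) g" using Box.IH[of "w @ [a]"] Box.prems by (simp add: good_simps)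
  moreover have "sat NK (to_nat Uu) g" using Uu_sat Box.prems by (simp add: good_simps)
  ultimately show ?case unfolding NK_def using sat_mk_Box[of Sk UNIV "{Y0}" dN lN a g] by simp
qed

lemma Y_lem:
  assumes catchK: "\<forall>w. 1 \<le> length w \<and> length w < L \<longrightarrow> (\<exists>q\<in>rk K (init K) w. Pp \<notin> lab K q)"
  shows "good g \<Longrightarrow> hgt g < L \<Longrightarrow> (\<forall>q\<in>init K. sat K q g) \<Longrightarrow> sat NK (to_nat Y0) g"
proof (induction g)
  case (Atom x)
  then show ?case unfolding NK_def using sat_mk_Atom[of Y0 UNIV] by simp
next
  case (Neg g)
  then show ?case by (simp add: good_simps)
next
  case (Or g1 g2)
  then show ?case by (simp add: good_simps)
next
  case (And g1 g2)
  then show ?case by (simp add: good_simps)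
next
  case (Dia x1 x2 g)
  then show ?case unfolding NK_def
    using sat_mk_Dia_le1[OF fin_nst closed_N, of Y0 x2 Uu x1 "{Y0}" lN g] Uu_sat[of g] by (simp add: good_simps NK_def)
next
  case (Box a g)
  have "\<forall>q\<in>rk K (init K) [a]. sat K q g" using Box.prems(3) by (auto simp: rk_def)
  then have "sat NK (to_nat Sk) g" using S_lem[OF catchK, of g "[a]"] Box.prems by (simp add: good_simps)
  moreover have "sat NK (to_nat Uu) g" using Uu_sat Box.prems by (simp add: good_simps)
  ultimately show ?case unfolding NK_def using sat_mk_Box[of Y0 UNIV "{Y0}" dN lN a g] by simp
qed

fun dual :: "form \<Rightarrow> form" where
  "dual (Atom q) = Atom q"
| "dual (Neg f) = Neg (dual f)"
| "dual (Or f g) = And (dual f) (dual g)"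
| "dual (And f g) = Or (dual f) (dual g)"
| "dual (Dia al k f) = Box al (dual f)"
| "dual (Box al f) = Dia al 1 (dual f)"

lemma hgt_dual: "hgt (dual f) = hgt f" by (induction f) auto

lemma good_dual: "ONeg \<notin> ops f \<Longrightarrow> OAnd \<notin> ops f \<Longrightarrow> good (dual f)"
  by (induction f) (auto simp: good_simps)

lemma dual_sat:
  assumes fin: "finite V" and cl: "closed V d"
  shows "(\<forall>al kk. ODia al kk \<in> ops f \<longrightarrow> kk = 1) \<Longrightarrow> s \<in> V \<Longrightarrow>
     sat (mkK V I d (\<lambda>s. \<not> l s)) (to_nat s) f \<longleftrightarrow> \<not> sat (mkK V I d l) (to_nat s) (dual f)"
proof (induction f arbitrary: s)
  case (Atom x)
  then show ?case using sat_mk_Atom[of s V] by simp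
next
  case (Neg f)
  then show ?case by simp
next
  case (Or f1 f2)
  then show ?case by simp
next
  case (And f1 f2)
  then show ?case by simp
next
  case (Dia a k g)
  have k: "k = 1" using Dia.prems by simp
  have sub: "\<forall>t\<in>d s a. t \<in> V" using cl Dia.prems unfolding closed_def by blast
  have "sat (mkK V I d (\<lambda>s. \<not> l s)) (to_nat s) (Dia a k g) \<longleftrightarrow> (\<exists>t\<in>d s a. sat (mkK V I d (\<lambda>s. \<not> l s)) (to_nat t) g)"
    using sat_mk_Dia1[OF fin cl Dia.prems(2)] k by simp
  also have "\<dots> \<longleftrightarrow> (\<exists>t\<in>d s a. \<not> sat (mkK V I d l) (to_nat t) (dual g))"
  proof -
    have pg: "\<forall>al kk. ODia al kk \<in> ops g \<longrightarrow> kk = 1" using Dia.prems(1) by auto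
    have "\<forall>t\<in>d s a. (sat (mkK V I d (\<lambda>s. \<not> l s)) (to_nat t) g \<longleftrightarrow> \<not> sat (mkK V I d l) (to_nat t) (dual g))"
      using Dia.IH[OF pg] sub by blast
    then show ?thesis by blast
  qed
  also have "\<dots> \<longleftrightarrow> \<not> sat (mkK V I d l) (to_nat s) (dual (Dia a k g))"
    using sat_mk_Box[OF Dia.prems(2)] by auto
  finally show ?case .
next
  case (Box a g)
  have sub: "\<forall>t\<in>d s a. t \<in> V" using cl Box.prems unfolding closed_def by blast
  have "sat (mkK V I d (\<lambda>s. \<not> l s)) (to_nat s) (Box a g) \<longleftrightarrow> (\<forall>t\<in>d s a. sat (mkK V I d (\<lambda>s. \<not> l s)) (to_nat t) g)"
    using sat_mk_Box[OF Box.prems(2)] by simp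
  also have "\<dots> \<longleftrightarrow> (\<forall>t\<in>d s a. \<not> sat (mkK V I d l) (to_nat t) (dual g))"
  proof -
    have pg: "\<forall>al kk. ODia al kk \<in> ops g \<longrightarrow> kk = 1" using Box.prems(1) by simp
    have "\<forall>t\<in>d s a. (sat (mkK V I d (\<lambda>s. \<not> l s)) (to_nat t) g \<longleftrightarrow> \<not> sat (mkK V I d l) (to_nat t) (dual g))"
      using Box.IH[OF pg] sub by blast
    then show ?thesis by blast
  qed
  also have "\<dots> \<longleftrightarrow> \<not> sat (mkK V I d l) (to_nat s) (dual (Box a g))"
    using sat_mk_Dia1[OF fin cl Box.prems(2)] by auto
  finally show ?case .
qed

fun bx :: "act list \<Rightarrow> form" where
  "bx [] = Atom Pp" | "bx (a # w) = Box a (bx w)"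
fun dx :: "act list \<Rightarrow> form" where
  "dx [] = Atom Pp" | "dx (a # w) = Dia a 1 (dx w)"

lemma dual_dx: "dual (dx w) = bx w" by (induction w) auto
lemma ops_bx: "ops (bx w) \<subseteq> insert (OAtom Pp) Op_box" by (induction w) (auto simp: Op_box_def)
lemma ops_dx: "ops (dx w) \<subseteq> insert (OAtom Pp) Op_dia" by (induction w) (auto simp: Op_dia_def)
lemma dia_dx: "ODia al k \<in> ops (dx w) \<Longrightarrow> k = 1" by (induction w) auto

lemma sat_bx: "(\<forall>q\<in>S. sat K q (bx w)) \<longleftrightarrow> (\<forall>q\<in>rk K S w. Pp \<in> lab K q)"
proof (induction w arbitrary: S)
  case Nil
  then show ?case by (simp add: rk_def)
next
  case (Cons a w)
  have "rk K S (a # w) = rk K (\<Union>q\<in>S. trans K q a) w" by (simp add: rk_def)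
  then show ?case using Cons.IH[of "\<Union>q\<in>S. trans K q a"] by auto
qed

lemma Sk_reach: "Sk \<in> S \<or> Y0 \<in> S \<Longrightarrow> w \<noteq> [] \<Longrightarrow> Sk \<in> rkA dN S w"
proof (induction w arbitrary: S)
  case Nil
  then show ?case by simp
next
  case (Cons a w)
  have "Sk \<in> dN Sk a" "Sk \<in> dN Y0 a" by simp_all
  then have "Sk \<in> (\<Union>s\<in>S. dN s a)" using Cons.prems(1) by blast
  then show ?case using Cons.IH[of "\<Union>s\<in>S. dN s a"] by (cases w) (auto simp: rkA_def)
qed



definition Vd :: "nat \<Rightarrow> st set" where
  "Vd R = insert Err ((\<lambda>(j,c,f). Dst j c f) ` ({..<R} \<times> UNIV \<times> UNIV) \<union> (\<lambda>(v,d). Pend v d) ` (UNIV \<times> {1..R}))"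

lemma mem_Vd: "Err \<in> Vd R" "j < R \<Longrightarrow> Dst j c f \<in> Vd R" "1 \<le> d \<Longrightarrow> d \<le> R \<Longrightarrow> Pend v d \<in> Vd R"
  unfolding Vd_def by (auto intro!: rev_image_eqI[of "(j,c,f)"] rev_image_eqI[of "(v,d)"])

lemma Vd_cases: "x \<in> Vd R \<Longrightarrow> x = Err \<or> (\<exists>j c f. x = Dst j c f \<and> j < R) \<or> (\<exists>v d. x = Pend v d \<and> 1 \<le> d \<and> d \<le> R)"
  unfolding Vd_def by auto

lemma fin_Vd: "finite (Vd R)" by (simp add: Vd_def)

lemma closed_Vd: assumes R: "R \<ge> 1" shows "closed (Vd R) (dl R)"
  unfolding closed_def
proof (intro ballI allI subsetI)
  fix s a x assume s: "s \<in> Vd R" and x: "x \<in> dl R s a"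
  from Vd_cases[OF s] show "x \<in> Vd R"
  proof (elim disjE exE conjE)
    assume "s = Err" then show ?thesis using x mem_Vd by simp
  next
    fix j c f assume "s = Dst j c f" "j < R"
    then show ?thesis using x mem_Vd R by (auto split: if_splits)
  next
    fix v d assume "s = Pend v d" "1 \<le> d" "d \<le> R"
    then show ?thesis using x mem_Vd R by (auto split: if_splits)
  qed
qed

lemma card_Vd_le: "card (Vd R) \<le> 6 * R + 1"
proof -
  let ?A = "(\<lambda>(j,c,f). Dst j c f) ` ({..<R} \<times> (UNIV::bool set) \<times> (UNIV::bool set))"
  let ?B = "(\<lambda>(v,d). Pend v d) ` ((UNIV::bool set) \<times> {1..R})"
  have a: "card ?A \<le> 4 * R"
  proof -
    have "card ?A \<le> card ({..<R} \<times> (UNIV::bool set) \<times> (UNIV::bool set))" by (rule card_image_le) simp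
    also have "\<dots> = 4 * R" by (simp only: card_cartesian_product card_UNIV_bool card_lessThan)
    finally show ?thesis .
  qed
  have b: "card ?B \<le> 2 * R"
  proof -
    have "card ?B \<le> card ((UNIV::bool set) \<times> {1..R})" by (rule card_image_le) simp
    also have "\<dots> = 2 * R" by (simp add: card_cartesian_product card_UNIV_bool)
    finally show ?thesis .
  qed
  have fAB: "finite (?A \<union> ?B)" by simp
  have "card (Vd R) \<le> Suc (card (?A \<union> ?B))" unfolding Vd_def using fAB by (simp add: card_insert_if)
  also have "\<dots> \<le> Suc (card ?A + card ?B)" using card_Un_le[of ?A ?B] by simp
  finally show ?thesis using a b by simp
qed

lemma card_Vd_ge: "R \<le> card (Vd R)"
proof -
  have "Pend True ` {1..R} \<subseteq> Vd R" using mem_Vd(3) by auto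
  then have "card (Pend True ` {1..R}) \<le> card (Vd R)" using fin_Vd by (intro card_mono) auto
  moreover have "card (Pend True ` {1..R}) = R" by (subst card_image) (auto simp: inj_on_def)
  ultimately show ?thesis by simp
qed

definition MK :: "nat \<Rightarrow> kripke" where "MK R = mkK (Vd R) {Dst 0 True True} (dl R) lb"
definition MKc :: "nat \<Rightarrow> kripke" where "MKc R = mkK (Vd R) {Dst 0 True True} (dl R) (\<lambda>s. \<not> lb s)"

lemma rkA_rch: "rkA (dl R) {Dst 0 True True} w = rch R w"
  by (simp add: rkA_def rch_def stepS_def[abs_def])

lemma init_sub: "R \<ge> 1 \<Longrightarrow> {Dst 0 True True} \<subseteq> Vd R" using mem_Vd by simp

lemma rk_MK: assumes R: "R \<ge> 1" shows "rk (MK R) (init (MK R)) w = to_nat ` rch R w"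
proof -
  have "init (MK R) = to_nat ` {Dst 0 True True}" by (simp add: MK_def mkK_def)
  then show ?thesis using rk_mk[OF closed_Vd[OF R] init_sub[OF R]] rkA_rch unfolding MK_def by simp
qed

lemma rch_Vd: "R \<ge> 1 \<Longrightarrow> rch R w \<subseteq> Vd R"
  using rkA_sub[OF closed_Vd init_sub] rkA_rch by metis

lemma catchM:
  assumes R: "R \<ge> 1"
  shows "\<forall>w. 1 \<le> length w \<and> length w < R * (2^R - 1) \<longrightarrow> (\<exists>q\<in>rk (MK R) (init (MK R)) w. Pp \<notin> lab (MK R) q)"
proof (intro allI impI)
  fix w :: "act list" assume a: "1 \<le> length w \<and> length w < R * (2^R - 1)"
  then have "w \<noteq> []" by auto
  then obtain x where x: "x \<in> rch R w" "\<not> lb x" using catch[OF R] a by blast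
  have xV: "x \<in> Vd R" using x rch_Vd[OF R] by blast
  have "to_nat x \<in> rk (MK R) (init (MK R)) w" using rk_MK[OF R] x by simp
  moreover have "Pp \<notin> lab (MK R) (to_nat x)" using lab_mk[OF xV] x unfolding MK_def by simp
  ultimately show "\<exists>q\<in>rk (MK R) (init (MK R)) w. Pp \<notin> lab (MK R) q" by blast
qed

lemma M_bx: assumes R: "R \<ge> 1" shows "\<forall>q\<in>init (MK R). sat (MK R) q (bx (WW R))"
proof -
  have "\<forall>q\<in>rk (MK R) (init (MK R)) (WW R). Pp \<in> lab (MK R) q"
  proof
    fix q assume "q \<in> rk (MK R) (init (MK R)) (WW R)"
    then obtain x where x: "x \<in> rch R (WW R)" "q = to_nat x" using rk_MK[OF R] by auto
    have xV: "x \<in> Vd R" using x rch_Vd[OF R] by blast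
    show "Pp \<in> lab (MK R) q" using lab_mk[OF xV] x WW_sound[OF R] unfolding MK_def by simp
  qed
  then show ?thesis using sat_bx by blast
qed

lemma N_bx: assumes "w \<noteq> []" shows "\<not> sat NK (to_nat Y0) (bx w)"
proof -
  have "rk NK (to_nat ` {Y0}) w = to_nat ` rkA dN {Y0} w"
    unfolding NK_def by (rule rk_mk[OF closed_N]) simp
  moreover have "Sk \<in> rkA dN {Y0} w" using Sk_reach assms by simp
  ultimately have "to_nat Sk \<in> rk NK {to_nat Y0} w" by simp
  moreover have "Pp \<notin> lab NK (to_nat Sk)" unfolding NK_def using lab_mk[of Sk UNIV] by simp
  ultimately show ?thesis using sat_bx[of "{to_nat Y0}" NK w] by auto
qed

lemma init_NK: "init NK = {to_nat Y0}" "init NKc = {to_nat Y0}" by (simp_all add: NK_def NKc_def mkK_def)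
lemma init_MK: "init (MK R) = {to_nat (Dst 0 True True)}" "init (MKc R) = {to_nat (Dst 0 True True)}"
  by (simp_all add: MK_def MKc_def mkK_def)

lemma sum_two_le: "(\<Sum>K\<in>{A,B}. g K) \<le> g A + (g B :: nat)"
  by (cases "A = B") auto
lemma sum_two_ge: "g A \<le> (\<Sum>K\<in>{A,B}. (g K :: nat))" "g B \<le> (\<Sum>K\<in>{A,B}. (g K :: nat))"
  by (cases "A = B"; simp)+

lemma final_bound:
  assumes R: "R \<ge> 1" and k: "k \<le> 6 * R + 4" and h: "R * (2^R - 1) \<le> hgt f"
  shows "2 powr (real k / 25) \<le> real (sz f)"
proof -
  have "real k / 25 \<le> real R" using k R by simp
  then have "2 powr (real k / 25) \<le> 2 powr (real R)" by (intro powr_mono) auto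
  also have "\<dots> = 2 ^ R" by (simp add: powr_realpow)
  also have "(2::real) ^ R \<le> real (R * (2^R - 1) + 1)"
  proof -
    have "(1::nat) \<le> 2^R" by simp
    then have "2^R - 1 \<le> R * (2^R - 1)" using R by simp
    then have "(2::nat)^R \<le> R * (2^R - 1) + 1" by linarith
    then show ?thesis by (metis of_nat_le_iff of_nat_numeral of_nat_power)
  qed
  also have "\<dots> \<le> real (sz f)"
  proof -
    have "R * (2^R - 1) + 1 \<le> sz f" using h hgt_sz[of f] by linarith
    then show ?thesis by (simp only: of_nat_le_iff)
  qed
  finally show ?thesis .
qed



lemma wf_MK: "R \<ge> 1 \<Longrightarrow> wf_kripke (MK R)" "R \<ge> 1 \<Longrightarrow> wf_kripke (MKc R)"
  unfolding MK_def MKc_def using fin_Vd closed_Vd init_sub by (auto intro!: wf_mkK)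
lemma wf_NK: "wf_kripke NK" "wf_kripke NKc"
  unfolding NK_def NKc_def using fin_nst closed_N by (auto intro!: wf_mkK)
lemma card_MK: "card (states (MK R)) = card (Vd R)" "card (states (MKc R)) = card (Vd R)"
  unfolding MK_def MKc_def by (simp_all add: card_mkK)
lemma card_NK: "card (states NK) = 3" "card (states NKc) = 3"
  unfolding NK_def NKc_def by (simp_all add: card_mkK card_nst)

theorem proposition5:
  fixes Ops :: "oper set"
  assumes "valid_ops Ops"
    and "monotone_frag Ops"
    and "OAtom Pp \<in> Ops"
    and "\<forall>al k. k \<ge> 2 \<longrightarrow> ODia al k \<notin> Ops"
    and "Op_box \<subseteq> Ops \<or> Op_dia \<subseteq> Ops"
    and "OAnd \<in> Ops \<longrightarrow> Op_box \<subseteq> Ops"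
    and "OOr \<in> Ops \<longrightarrow> Op_dia \<subseteq> Ops"
  shows "\<forall>n::nat. \<exists>Pos Negs :: kripke set.
           finite Pos \<and> finite Negs \<and>
           (\<forall>K\<in>Pos \<union> Negs. wf_kripke K) \<and>
           (\<Sum>K\<in>Pos \<union> Negs. card (states K)) \<ge> n \<and>
           (\<exists>f. in_fragment Ops f \<and> separating Pos Negs f) \<and>
           (\<forall>f. in_fragment Ops f \<and> separating Pos Negs f \<longrightarrow>
               2 powr (real (\<Sum>K\<in>Pos \<union> Negs. card (states K)) / 25) \<le> real (sz f))"
proof
  fix n :: nat
  define R where "R = Suc n"
  have R: "R \<ge> 1" by (simp add: R_def)
  define L where "L = R * (2^R - 1)"
  define W where "W = WW R"
  have Wne: "W \<noteq> []" using WW_ne[OF R] W_def by simp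
  have noNeg: "ONeg \<notin> Ops" using assms(2) unfolding monotone_frag_def by simp
  have dia1: "k = 1" if "ODia al k \<in> Ops" for al k
  proof -
    have "1 \<le> k" using assms(1) that unfolding valid_ops_def by blast
    moreover have "\<not> 2 \<le> k" using assms(4) that by blast
    ultimately show ?thesis by simp
  qed
  have cardV: "n \<le> card (Vd R)" "card (Vd R) \<le> 6 * R + 1" using card_Vd_ge[of R] card_Vd_le[of R] R_def by auto
  show "\<exists>Pos Negs :: kripke set.
           finite Pos \<and> finite Negs \<and>
           (\<forall>K\<in>Pos \<union> Negs. wf_kripke K) \<and>
           (\<Sum>K\<in>Pos \<union> Negs. card (states K)) \<ge> n \<and>
           (\<exists>f. in_fragment Ops f \<and> separating Pos Negs f) \<and>
           (\<forall>f. in_fragment Ops f \<and> separating Pos Negs f \<longrightarrow>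
               2 powr (real (\<Sum>K\<in>Pos \<union> Negs. card (states K)) / 25) \<le> real (sz f))"
  proof (cases "OOr \<notin> Ops \<and> Op_box \<subseteq> Ops")
    case True
    let ?P = "{MK R}" and ?N = "{NK}"
    have un: "?P \<union> ?N = {MK R, NK}" by auto
    have sle: "(\<Sum>K\<in>?P \<union> ?N. card (states K)) \<le> 6 * R + 4"
      using sum_two_le[of "\<lambda>K. card (states K)" "MK R" NK] cardV card_MK card_NK un by simp
    have sge: "n \<le> (\<Sum>K\<in>?P \<union> ?N. card (states K))"
      using sum_two_ge(1)[of "\<lambda>K. card (states K)" "MK R" NK] cardV card_MK un by simp
    have wit: "in_fragment Ops (bx W) \<and> separating ?P ?N (bx W)"
      unfolding in_fragment_def separating_def models_def
      using ops_bx[of W] True assms(3) M_bx[OF R] N_bx[OF Wne] init_NK W_def by auto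
    have lb: "R * (2^R - 1) \<le> hgt f" if f: "in_fragment Ops f" "separating ?P ?N f" for f
    proof (rule ccontr)
      assume "\<not> ?thesis"
      then have h: "hgt f < R * (2^R - 1)" by simp
      have g: "good f" using f(1) noNeg True dia1 unfolding in_fragment_def good_def by fastforce
      have "\<forall>q\<in>init (MK R). sat (MK R) q f" using f(2) unfolding separating_def models_def by simp
      then have "sat NK (to_nat Y0) f" using Y_lem[OF catchM[OF R] g h] by simp
      then show False using f(2) init_NK unfolding separating_def models_def by simp
    qed
    show ?thesis
      apply (rule exI[of _ ?P], rule exI[of _ ?N])
      using wf_MK[OF R] wf_NK sge wit lb final_bound[OF R sle] by auto
  next
    case False
    then have dia: "Op_dia \<subseteq> Ops" and noAnd: "OAnd \<notin> Ops"
      using assms(2,5,6,7) unfolding monotone_frag_def by auto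
    let ?P = "{NKc}" and ?N = "{MKc R}"
    have un: "?P \<union> ?N = {MKc R, NKc}" by auto
    have sle: "(\<Sum>K\<in>?P \<union> ?N. card (states K)) \<le> 6 * R + 4"
      using sum_two_le[of "\<lambda>K. card (states K)" "MKc R" NKc] cardV card_MK card_NK un by simp
    have sge: "n \<le> (\<Sum>K\<in>?P \<union> ?N. card (states K))"
      using sum_two_ge(1)[of "\<lambda>K. card (states K)" "MKc R" NKc] cardV card_MK un by simp
    have dsN: "sat NKc (to_nat Y0) f \<longleftrightarrow> \<not> sat NK (to_nat Y0) (dual f)"
      if "\<forall>al kk. ODia al kk \<in> ops f \<longrightarrow> kk = 1" for f
      unfolding NKc_def NK_def by (rule dual_sat[OF fin_nst closed_N that]) simp
    have dsM: "sat (MKc R) (to_nat (Dst 0 True True)) f \<longleftrightarrow> \<not> sat (MK R) (to_nat (Dst 0 True True)) (dual f)"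
      if "\<forall>al kk. ODia al kk \<in> ops f \<longrightarrow> kk = 1" for f
      unfolding MKc_def MK_def by (rule dual_sat[OF fin_Vd closed_Vd[OF R] that]) (rule mem_Vd(2)[of 0 R], use R in simp)
    have wit: "in_fragment Ops (dx W) \<and> separating ?P ?N (dx W)"
    proof -
      have d1: "\<forall>al kk. ODia al kk \<in> ops (dx W) \<longrightarrow> kk = 1" using dia_dx by blast
      have "sat NKc (to_nat Y0) (dx W)" using dsN[OF d1] N_bx[OF Wne] dual_dx by simp
      moreover have "\<not> sat (MKc R) (to_nat (Dst 0 True True)) (dx W)"
        using dsM[OF d1] M_bx[OF R] dual_dx init_MK W_def by simp
      moreover have "ops (dx W) \<subseteq> Ops" using ops_dx[of W] dia assms(3) by auto
      ultimately show ?thesis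
        unfolding in_fragment_def separating_def models_def using init_NK init_MK by simp
    qed
    have lb: "R * (2^R - 1) \<le> hgt f" if f: "in_fragment Ops f" "separating ?P ?N f" for f
    proof (rule ccontr)
      assume "\<not> ?thesis"
      then have h: "hgt (dual f) < R * (2^R - 1)" by (simp add: hgt_dual)
      have d1: "\<forall>al kk. ODia al kk \<in> ops f \<longrightarrow> kk = 1" using f(1) dia1 unfolding in_fragment_def by blast
      have g: "good (dual f)" using f(1) noNeg noAnd unfolding in_fragment_def by (intro good_dual) auto
      have "sat NKc (to_nat Y0) f" using f(2) init_NK unfolding separating_def models_def by simp
      then have nN: "\<not> sat NK (to_nat Y0) (dual f)" using dsN[OF d1] by simp
      have "\<not> sat (MKc R) (to_nat (Dst 0 True True)) f" using f(2) init_MK unfolding separating_def models_def by simp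
      then have "sat (MK R) (to_nat (Dst 0 True True)) (dual f)" using dsM[OF d1] by simp
      then have "\<forall>q\<in>init (MK R). sat (MK R) q (dual f)" using init_MK by simp
      then have "sat NK (to_nat Y0) (dual f)" using Y_lem[OF catchM[OF R] g h] by simp
      then show False using nN by simp
    qed
    show ?thesis
      apply (rule exI[of _ ?P], rule exI[of _ ?N])
      using wf_MK[OF R] wf_NK sge wit lb final_bound[OF R sle] by auto
  qed
qed

end
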